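(* For every $A\ge0$ and $T>0$ there is $B\ge0$ (depending only on $A$, $T$ and $f,r$) such that: if $y$ solves $y_t+f(y)_x=y_{xx}+r(y)$ on $[0,1]\times(0,T)$ with $y(0,t)=y(1,t)=0$ and $\|y(\cdot,0)\|_\infty\le A$, then $\|y(\cdot,t)\|_\infty\le B$ for all $t<T$.
   Context: Standing assumptions: $f,r\in C^2(\mathbb R)$ and $\int_{-\infty}^0\frac{dy}{|r(y)|+1}=\int_0^\infty\frac{dy}{|r(y)|+1}=\infty$. Solutions are classical solutions with initial data in $H^1_0(0,1)$. *)

theory Defs
  imports "HOL-Analysis.Analysis"
begin

definition C2 :: "(real \<Rightarrow> real) \<Rightarrow> bool" where
  "C2 g \<longleftrightarrow> (\<exists>g1 g2. (\<forall>x. (g has_real_derivative g1 x) (at x)) \<and>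
                     (\<forall>x. (g1 has_real_derivative g2 x) (at x)) \<and>
                     continuous_on UNIV g2)"

definition osgood :: "(real \<Rightarrow> real) \<Rightarrow> bool" where
  "osgood r \<longleftrightarrow>
     filterlim (\<lambda>a. integral {a..0} (\<lambda>y. 1 / (\<bar>r y\<bar> + 1))) at_top at_bot \<and>
     filterlim (\<lambda>b. integral {0..b} (\<lambda>y. 1 / (\<bar>r y\<bar> + 1))) at_top at_top"

text \<open>Membership in H^1_0(0,1) of a function on [0,1]: it is the primitive of an
  L^2(0,1) function, vanishing at both endpoints.\<close>
definition H10 :: "(real \<Rightarrow> real) \<Rightarrow> bool" where
  "H10 u \<longleftrightarrow> (\<exists>g. g absolutely_integrable_on {0..1} \<and>
                   (\<lambda>x. (g x)\<^sup>2) integrable_on {0..1} \<and>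
                   (\<forall>x\<in>{0..1}. u x = integral {0..x} g)) \<and> u 0 = 0 \<and> u 1 = 0"

definition classical_sol ::
  "(real \<Rightarrow> real) \<Rightarrow> (real \<Rightarrow> real) \<Rightarrow> real \<Rightarrow> (real \<Rightarrow> real \<Rightarrow> real) \<Rightarrow> bool" where
  "classical_sol f r T y \<longleftrightarrow>
     continuous_on ({0..1} \<times> {0..<T}) (\<lambda>(x,t). y x t) \<and>
     (\<exists>yt yx yxx F.
        continuous_on ({0<..<1} \<times> {0<..<T}) (\<lambda>(x,t). yt x t) \<and>
        continuous_on ({0<..<1} \<times> {0<..<T}) (\<lambda>(x,t). yx x t) \<and>
        continuous_on ({0<..<1} \<times> {0<..<T}) (\<lambda>(x,t). yxx x t) \<and>
        (\<forall>x\<in>{0<..<1}. \<forall>t\<in>{0<..<T}.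
           ((\<lambda>s. y x s) has_real_derivative yt x t) (at t) \<and>
           ((\<lambda>z. y z t) has_real_derivative yx x t) (at x) \<and>
           ((\<lambda>z. yx z t) has_real_derivative yxx x t) (at x) \<and>
           ((\<lambda>z. f (y z t)) has_real_derivative F x t) (at x) \<and>
           yt x t + F x t = yxx x t + r (y x t))) \<and>
     (\<forall>t\<in>{0<..<T}. y 0 t = 0 \<and> y 1 t = 0) \<and>
     H10 (\<lambda>x. y x 0)"

end

theory Submission
  imports Defs
begin

lemma left_lim_le:
  fixes \<phi> :: "real \<Rightarrow> real"
  assumes "continuous_on {0..b} \<phi>" "0 < b" "\<forall>s\<in>{0..<b}. \<phi> s < c"
  shows "\<phi> b \<le> c"
proof -
  have "(\<phi> \<longlongrightarrow> \<phi> b) (at_left b)"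
    using assms(1,2) by (metis at_within_Icc_at_left atLeastAtMost_iff continuous_on_def less_eq_real_def)
  moreover have "eventually (\<lambda>s. \<phi> s \<le> c) (at_left b)"
    using eventually_at_left_real[OF assms(2)] assms(3)
    by (smt (verit, best) atLeastLessThan_iff eventually_mono greaterThanLessThan_iff)
  ultimately show ?thesis
    using tendsto_upperbound trivial_limit_at_left_real by blast
qed

lemma core:
  fixes f r G g :: "real \<Rightarrow> real" and y :: "real \<Rightarrow> real \<Rightarrow> real"
  assumes fd: "\<forall>u. f differentiable (at u)"
    and Gc: "continuous_on UNIV G" and Gm: "mono G"
    and Gd: "\<forall>z>0. (G has_real_derivative g z) (at z)"
    and gpos: "\<forall>z>0. g z > 0" and gr: "\<forall>z>0. g z * r z < 1"
    and sol: "classical_sol f r T y"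
    and init: "\<forall>x\<in>{0..1}. G (y x 0) < c" and G0: "G 0 < c"
  shows "\<forall>t\<in>{0..<T}. \<forall>x\<in>{0..1}. G (y x t) - t < c"
proof (rule ccontr)
  assume "\<not> ?thesis"
  then obtain t1 x1 where t1: "t1 \<in> {0..<T}" and x1: "x1 \<in> {0..1}" and bad: "G (y x1 t1) - t1 \<ge> c"
    by force
  from sol obtain yt yx yxx F where
    yc: "continuous_on ({0..1} \<times> {0..<T}) (\<lambda>(x,t). y x t)" and
    eq: "\<forall>x\<in>{0<..<1}. \<forall>t\<in>{0<..<T}.
           ((\<lambda>s. y x s) has_real_derivative yt x t) (at t) \<and>
           ((\<lambda>z. y z t) has_real_derivative yx x t) (at x) \<and>
           ((\<lambda>z. yx z t) has_real_derivative yxx x t) (at x) \<and>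
           ((\<lambda>z. f (y z t)) has_real_derivative F x t) (at x) \<and>
           yt x t + F x t = yxx x t + r (y x t)" and
    bd: "\<forall>t\<in>{0<..<T}. y 0 t = 0 \<and> y 1 t = 0"
    unfolding classical_sol_def by blast
  define K where "K = {0..1::real} \<times> {0..t1::real}"
  define \<phi> where "\<phi> = (\<lambda>p::real\<times>real. G (y (fst p) (snd p)) - snd p)"
  have KT: "K \<subseteq> {0..1} \<times> {0..<T}" using t1 by (auto simp: K_def)
  have yc': "continuous_on K (\<lambda>p. y (fst p) (snd p))"
    using continuous_on_subset[OF yc KT] by (simp add: case_prod_beta')
  have phic: "continuous_on K \<phi>"
    unfolding \<phi>_def
    by (intro continuous_intros continuous_on_compose2[OF Gc yc']) auto
  define P where "P = K \<inter> \<phi> -` {c..}"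
  have "closed P" unfolding P_def
    by (rule continuous_closed_preimage[OF phic]) (auto simp: K_def closed_Times)
  moreover have "compact K" by (simp add: K_def compact_Times)
  ultimately have "compact P" using compact_Int_closed[of K P] by (simp add: P_def Int_absorb1)
  hence cS: "compact (snd ` P)" by (intro compact_continuous_image continuous_intros)
  have "(x1,t1) \<in> P" using x1 t1 bad by (auto simp: P_def K_def \<phi>_def)
  hence "snd ` P \<noteq> {}" by blast
  then obtain ts where tsS: "ts \<in> snd ` P" and tsmin: "\<forall>t\<in>snd ` P. ts \<le> t"
    using compact_attains_inf[OF cS] by blast
  then obtain xs where xsP: "(xs, ts) \<in> P" by force
  hence xs01: "xs \<in> {0..1}" and ts0: "0 \<le> ts" and tst1: "ts \<le> t1" and phige: "\<phi> (xs,ts) \<ge> c"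
    by (auto simp: P_def K_def)
  have tsT: "ts < T" using tst1 t1 by simp
  have tspos: "ts > 0"
  proof (rule ccontr)
    assume "\<not> ts > 0" hence "ts = 0" using ts0 by simp
    thus False using phige init xs01 by (force simp: \<phi>_def)
  qed
  have xs0: "xs \<noteq> 0" using phige bd tspos tsT G0 by (auto simp: \<phi>_def)
  have xs1: "xs \<noteq> 1" using phige bd tspos tsT G0 by (auto simp: \<phi>_def)
  have before: "\<phi> (x,s) < c" if "x \<in> {0..1}" "s \<in> {0..<ts}" for x s
  proof (rule ccontr)
    assume "\<not> \<phi> (x,s) < c"
    hence "(x,s) \<in> P" using that tst1 by (auto simp: P_def K_def)
    hence "ts \<le> s" using tsmin by force
    thus False using that by simp
  qed
  have atts: "\<phi> (x,ts) \<le> c" if x: "x \<in> {0..1}" for x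
  proof (rule left_lim_le[where \<phi>="\<lambda>s. \<phi> (x,s)"])
    show "continuous_on {0..ts} (\<lambda>s. \<phi> (x, s))"
      by (rule continuous_on_compose2[OF phic]) (use x tst1 in \<open>auto intro!: continuous_intros simp: K_def\<close>)
    show "0 < ts" by fact
    show "\<forall>s\<in>{0..<ts}. \<phi> (x, s) < c" using before x by auto
  qed
  have phieq: "\<phi> (xs,ts) = c" using atts[OF xs01] phige by simp
  define ys where "ys = y xs ts"
  have Gys: "G ys = c + ts" using phieq by (simp add: \<phi>_def ys_def)
  have yspos: "ys > 0"
  proof (rule ccontr)
    assume "\<not> ys > 0" hence "G ys \<le> G 0" using Gm by (simp add: mono_def)
    thus False using Gys G0 tspos by simp
  qed
  have Gstrict: "G a < G b" if "0 < a" "a < b" for a b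
  proof (rule DERIV_pos_imp_increasing[OF that(2)])
    fix x assume "a \<le> x" "x \<le> b"
    hence "x > 0" using that by simp
    thus "\<exists>y. (G has_real_derivative y) (at x) \<and> y > 0" using Gd gpos by blast
  qed
  have ymax: "y x ts \<le> ys" if x: "x \<in> {0..1}" for x
  proof (rule ccontr)
    assume "\<not> y x ts \<le> ys"
    hence "G ys < G (y x ts)" using Gstrict yspos by simp
    thus False using atts[OF x] Gys by (simp add: \<phi>_def)
  qed
  have xsI: "xs \<in> {0<..<1}" using xs01 xs0 xs1 by auto
  have tsI: "ts \<in> {0<..<T}" using tspos tsT by auto
  note E = eq[rule_format, OF xsI tsI]
  have dyt: "((\<lambda>s. y xs s) has_real_derivative yt xs ts) (at ts)"
   and dyx: "((\<lambda>z. y z ts) has_real_derivative yx xs ts) (at xs)"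
   and dyxx: "((\<lambda>z. yx z ts) has_real_derivative yxx xs ts) (at xs)"
   and dF: "((\<lambda>z. f (y z ts)) has_real_derivative F xs ts) (at xs)"
   and eqn: "yt xs ts + F xs ts = yxx xs ts + r ys"
    using E by (auto simp: ys_def)
  have yx0: "yx xs ts = 0"
  proof (rule DERIV_local_max[OF dyx])
    show "0 < min xs (1 - xs)" using xsI by auto
    show "\<forall>z. \<bar>xs - z\<bar> < min xs (1 - xs) \<longrightarrow> y z ts \<le> y xs ts"
      using ymax by (auto simp: ys_def abs_if split: if_splits)
  qed
  have yxxle: "yxx xs ts \<le> 0"
  proof (rule ccontr)
    assume "\<not> yxx xs ts \<le> 0"
    then obtain d where d: "d > 0" and dd: "\<forall>h>0. h < d \<longrightarrow> yx xs ts < yx (xs + h) ts"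
      using DERIV_pos_inc_right[OF dyxx] by auto
    define h where "h = min (d/2) ((1 - xs)/2)"
    have h: "h > 0" "h < d" "xs + h < 1" using d xsI by (auto simp: h_def min_def field_simps)
    have "\<exists>z. xs < z \<and> z < xs + h \<and> y (xs+h) ts - y xs ts = (xs + h - xs) * yx z ts"
    proof (rule MVT2)
      show "xs < xs + h" using h by simp
      fix z assume "xs \<le> z" "z \<le> xs + h"
      hence "z \<in> {0<..<1}" using xsI h by auto
      thus "((\<lambda>z. y z ts) has_real_derivative yx z ts) (at z)" using eq tsI by blast
    qed
    then obtain z where z: "xs < z" "z < xs + h" "y (xs+h) ts - y xs ts = h * yx z ts" by auto
    have "yx z ts > 0" using dd[rule_format, of "z - xs"] z h yx0 by auto
    hence "h * yx z ts > 0" using h(1) by simp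
    hence "y (xs+h) ts > ys" using z(3) by (simp add: ys_def)
    moreover have "xs + h \<in> {0..1}" using h xsI by auto
    ultimately show False using ymax by fastforce
  qed
  obtain f' where df: "(f has_real_derivative f') (at ys)"
    using fd by (metis DERIV_deriv_iff_real_differentiable)
  have "((\<lambda>z. f (y z ts)) has_real_derivative f' * yx xs ts) (at xs)"
    using DERIV_chain2[OF _ dyx] df by (simp add: ys_def)
  hence F0: "F xs ts = 0" using DERIV_unique[OF dF] yx0 by simp
  have ytle: "yt xs ts \<le> r ys" using eqn F0 yxxle by simp
  define h where "h = (\<lambda>s. G (y xs s) - s)"
  have dh: "(h has_real_derivative g ys * yt xs ts - 1) (at ts)"
    unfolding h_def
    by (intro derivative_intros DERIV_chain2[OF _ dyt]) (use Gd yspos ys_def in auto)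
  have "g ys * yt xs ts - 1 \<ge> 0"
  proof (rule ccontr)
    assume "\<not> ?thesis"
    then obtain d where d: "d > 0" and dd: "\<forall>k>0. k < d \<longrightarrow> h ts < h (ts - k)"
      using DERIV_neg_dec_left[OF dh] by auto
    define k where "k = min (d/2) (ts/2)"
    have k: "k > 0" "k < d" "k < ts" using d tspos by (auto simp: k_def)
    have "h ts < h (ts - k)" using dd k by auto
    moreover have "h (ts - k) < c" using before[OF xs01, of "ts - k"] k by (auto simp: h_def \<phi>_def)
    moreover have "h ts = c" using phieq by (simp add: h_def \<phi>_def)
    ultimately show False by simp
  qed
  moreover have "g ys * yt xs ts \<le> g ys * r ys"
    using ytle gpos yspos by (simp add: mult_left_mono less_imp_le)
  ultimately show False using gr yspos by fastforce
qed
lemma upper: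
  fixes f r :: "real \<Rightarrow> real"
  assumes fd: "\<forall>u. f differentiable (at u)" and rc: "continuous_on UNIV r"
    and osg: "filterlim (\<lambda>b. integral {0..b} (\<lambda>y. 1 / (\<bar>r y\<bar> + 1))) at_top at_top"
  shows "\<forall>A\<ge>0. \<forall>T>0. \<exists>B. \<forall>y. classical_sol f r T y \<and> (\<forall>x\<in>{0..1}. \<bar>y x 0\<bar> \<le> A)
            \<longrightarrow> (\<forall>t\<in>{0..<T}. \<forall>x\<in>{0..1}. y x t \<le> B)"
proof (intro allI impI)
  fix A T :: real assume A: "A \<ge> 0" and T: "T > 0"
  define g where "g = (\<lambda>y. 1 / (\<bar>r y\<bar> + 1))"
  define G where "G = (\<lambda>z. integral {0..z} g)"
  have gc: "continuous_on S g" for S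
  proof -
    have "continuous_on S r" using rc continuous_on_subset by blast
    hence "continuous_on S (\<lambda>y. 1 / (\<bar>r y\<bar> + 1))"
      by (intro continuous_on_divide continuous_on_const continuous_on_add continuous_on_rabs)
         (auto simp: add_pos_nonneg)
    thus ?thesis by (simp add: g_def)
  qed
  have gpos: "g z > 0" for z by (simp add: g_def add_pos_nonneg)
  have gint: "g integrable_on {a..b}" for a b by (rule integrable_continuous_interval[OF gc])
  have Gmax: "G z = integral {0..max z 0} g" for z
    by (cases "z < 0") (simp_all add: G_def max_def)
  have Gd: "(G has_real_derivative g z) (at z)" if z: "z > 0" for z
  proof -
    have "(G has_real_derivative g z) (at z within {0..z+1})"
      unfolding G_def by (rule integral_has_real_derivative[OF gc]) (use z in simp)
    moreover have "z \<in> interior {0..z+1}" using z by simp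
    ultimately show ?thesis using at_within_interior by metis
  qed
  have Gc: "continuous_on UNIV G"
  proof (rule continuous_at_imp_continuous_on, intro ballI)
    fix z :: real
    define n where "n = \<bar>z\<bar> + 1"
    have "continuous_on {0..n} (\<lambda>z. integral {0..z} g)"
      by (rule indefinite_integral_continuous_1[OF gint])
    hence "continuous_on {-n..n} (\<lambda>z. integral {0..max z 0} g)"
    proof (rule continuous_on_compose2)
      show "continuous_on {-n..n} (\<lambda>z. max z (0::real))" by (intro continuous_intros)
      show "(\<lambda>z. max z 0) ` {-n..n} \<subseteq> {0..n}" by (auto simp: n_def)
    qed
    hence "continuous_on {-n..n} G" by (simp add: Gmax)
    moreover have "z \<in> interior {-n..n}" by (auto simp: n_def)
    ultimately show "isCont G z"
      using continuous_on_interior by blast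
  qed
  have Gm: "mono G"
  proof (rule monoI)
    fix a b :: real assume "a \<le> b"
    show "G a \<le> G b" unfolding G_def
    proof (rule integral_subset_le)
      show "{0..a} \<subseteq> {0..b}" using \<open>a \<le> b\<close> by auto
      show "g integrable_on {0..a}" "g integrable_on {0..b}" by (rule gint)+
      show "\<forall>x\<in>{0..b}. 0 \<le> g x" using gpos less_imp_le by blast
    qed
  qed
  have Gstrict: "G a < G b" if "0 < a" "a < b" for a b
  proof (rule DERIV_pos_imp_increasing[OF that(2)])
    fix x assume "a \<le> x" "x \<le> b"
    hence "x > 0" using that by simp
    thus "\<exists>y. (G has_real_derivative y) (at x) \<and> y > 0" using Gd gpos by blast
  qed
  define c where "c = G (A + 2)"
  have c1: "G (A+1) < c" unfolding c_def by (rule Gstrict) (use A in simp_all)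
  have "filterlim G at_top at_top" using osg unfolding G_def g_def by simp
  hence "eventually (\<lambda>z. G z \<ge> c + T) at_top" using filterlim_at_top by blast
  then obtain N where N: "\<And>z. z \<ge> N \<Longrightarrow> G z \<ge> c + T"
    unfolding eventually_at_top_linorder by blast
  show "\<exists>B. \<forall>y. classical_sol f r T y \<and> (\<forall>x\<in>{0..1}. \<bar>y x 0\<bar> \<le> A)
            \<longrightarrow> (\<forall>t\<in>{0..<T}. \<forall>x\<in>{0..1}. y x t \<le> B)"
  proof (intro exI allI impI ballI)
    fix y :: "real \<Rightarrow> real \<Rightarrow> real" and t x :: real assume H: "classical_sol f r T y \<and> (\<forall>x\<in>{0..1}. \<bar>y x 0\<bar> \<le> A)"
      and t: "t \<in> {0..<T}" and x: "x \<in> {0..1}"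
    have init: "\<forall>x\<in>{0..1}. G (y x 0) < c"
    proof
      fix x :: real assume "x \<in> {0..1}"
      hence "y x 0 \<le> A + 1" using H by force
      hence "G (y x 0) \<le> G (A+1)" using Gm by (simp add: mono_def)
      thus "G (y x 0) < c" using c1 by simp
    qed
    have G0: "G 0 < c" using Gm A c1 by (smt (verit) monoD)
    have gr: "\<forall>z>0. g z * r z < 1"
    proof (intro allI impI)
      fix z :: real
      have "r z < \<bar>r z\<bar> + 1" by simp
      thus "g z * r z < 1" by (simp add: g_def divide_simps add_pos_nonneg)
    qed
    have "\<forall>t\<in>{0..<T}. \<forall>x\<in>{0..1}. G (y x t) - t < c"
    proof (rule core[of f G g r T y c])
      show "\<forall>z>0. (G has_real_derivative g z) (at z)" using Gd by blast
      show "\<forall>z>0. g z > 0" using gpos by blast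
      show "classical_sol f r T y" using H by blast
    qed (use fd Gc Gm gr init G0 in auto)
    hence "G (y x t) - t < c" using t x by blast
    hence "G (y x t) < c + T" using t by simp
    thus "y x t \<le> N" using N[of "y x t"] by linarith
  qed
qed
lemma reflect_sol:
  assumes "classical_sol f r T y"
  shows "classical_sol (\<lambda>u. - f (- u)) (\<lambda>u. - r (- u)) T (\<lambda>x t. - y x t)"
proof -
  from assms obtain yt yx yxx F where
    yc: "continuous_on ({0..1} \<times> {0..<T}) (\<lambda>(x,t). y x t)" and
    c1: "continuous_on ({0<..<1} \<times> {0<..<T}) (\<lambda>(x,t). yt x t)" and
    c2: "continuous_on ({0<..<1} \<times> {0<..<T}) (\<lambda>(x,t). yx x t)" and
    c3: "continuous_on ({0<..<1} \<times> {0<..<T}) (\<lambda>(x,t). yxx x t)" and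
    eq: "\<forall>x\<in>{0<..<1}. \<forall>t\<in>{0<..<T}.
           ((\<lambda>s. y x s) has_real_derivative yt x t) (at t) \<and>
           ((\<lambda>z. y z t) has_real_derivative yx x t) (at x) \<and>
           ((\<lambda>z. yx z t) has_real_derivative yxx x t) (at x) \<and>
           ((\<lambda>z. f (y z t)) has_real_derivative F x t) (at x) \<and>
           yt x t + F x t = yxx x t + r (y x t)" and
    bd: "\<forall>t\<in>{0<..<T}. y 0 t = 0 \<and> y 1 t = 0" and
    h: "H10 (\<lambda>x. y x 0)"
    unfolding classical_sol_def by blast
  from h obtain g where g1: "g absolutely_integrable_on {0..1}" and
    g2: "(\<lambda>x. (g x)\<^sup>2) integrable_on {0..1}" and g3: "\<forall>x\<in>{0..1}. y x 0 = integral {0..x} g"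
    and h0: "y 0 0 = 0" and h1: "y 1 0 = 0"
    unfolding H10_def by blast
  have "H10 (\<lambda>x. - y x 0)"
    unfolding H10_def
  proof (intro conjI exI[of _ "\<lambda>x. - g x"])
    show "(\<lambda>x. - g x) absolutely_integrable_on {0..1}" using absolutely_integrable_scaleR_left[OF g1, of "-1"] by simp
    show "(\<lambda>x. (- g x)\<^sup>2) integrable_on {0..1}" using g2 by simp
    show "\<forall>x\<in>{0..1}. - y x 0 = integral {0..x} (\<lambda>x. - g x)" using g3 by (simp add: integral_neg)
  qed (use h0 h1 in auto)
  moreover have "continuous_on ({0..1} \<times> {0..<T}) (\<lambda>(x,t). - y x t)"
    using continuous_on_minus[OF yc] by (simp add: case_prod_beta')
  moreover have "continuous_on ({0<..<1} \<times> {0<..<T}) (\<lambda>(x,t). - yt x t)"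
    using continuous_on_minus[OF c1] by (simp add: case_prod_beta')
  moreover have "continuous_on ({0<..<1} \<times> {0<..<T}) (\<lambda>(x,t). - yx x t)"
    using continuous_on_minus[OF c2] by (simp add: case_prod_beta')
  moreover have "continuous_on ({0<..<1} \<times> {0<..<T}) (\<lambda>(x,t). - yxx x t)"
    using continuous_on_minus[OF c3] by (simp add: case_prod_beta')
  moreover have "\<forall>x\<in>{0<..<1}. \<forall>t\<in>{0<..<T}.
           ((\<lambda>s. - y x s) has_real_derivative - yt x t) (at t) \<and>
           ((\<lambda>z. - y z t) has_real_derivative - yx x t) (at x) \<and>
           ((\<lambda>z. - yx z t) has_real_derivative - yxx x t) (at x) \<and>
           ((\<lambda>z. - f (- (- y z t))) has_real_derivative - F x t) (at x) \<and>
           - yt x t + - F x t = - yxx x t + - r (- (- y x t))"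
  proof (intro ballI)
    fix x t :: real assume x: "x \<in> {0<..<1}" and t: "t \<in> {0<..<T}"
    note E = eq[rule_format, OF x t]
    show "((\<lambda>s. - y x s) has_real_derivative - yt x t) (at t) \<and>
           ((\<lambda>z. - y z t) has_real_derivative - yx x t) (at x) \<and>
           ((\<lambda>z. - yx z t) has_real_derivative - yxx x t) (at x) \<and>
           ((\<lambda>z. - f (- (- y z t))) has_real_derivative - F x t) (at x) \<and>
           - yt x t + - F x t = - yxx x t + - r (- (- y x t))"
      using E by (auto intro!: derivative_intros)
  qed
  ultimately show ?thesis
    unfolding classical_sol_def using bd
    by (intro conjI exI[of _ "\<lambda>x t. - yt x t"] exI[of _ "\<lambda>x t. - yx x t"]
        exI[of _ "\<lambda>x t. - yxx x t"] exI[of _ "\<lambda>x t. - F x t"]) auto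
qed

theorem lemma1:
  fixes f r :: "real \<Rightarrow> real"
  assumes "C2 f" and "C2 r" and "osgood r"
  shows "\<forall>A\<ge>0. \<forall>T>0. \<exists>B\<ge>0. \<forall>y. classical_sol f r T y \<and> (\<forall>x\<in>{0..1}. \<bar>y x 0\<bar> \<le> A)
            \<longrightarrow> (\<forall>t\<in>{0..<T}. \<forall>x\<in>{0..1}. \<bar>y x t\<bar> \<le> B)"
proof (intro allI impI)
  fix A T :: real assume A: "A \<ge> 0" and T: "T > 0"
  have fd: "\<forall>u. f differentiable (at u)"
    using assms(1) unfolding C2_def by (meson real_differentiable_def)
  have rd: "\<forall>u. r differentiable (at u)"
    using assms(2) unfolding C2_def by (meson real_differentiable_def)
  have rc: "continuous_on UNIV r"
    using rd by (simp add: continuous_at_imp_continuous_on differentiable_imp_continuous_within)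
  have o1: "filterlim (\<lambda>a. integral {a..0} (\<lambda>y. 1 / (\<bar>r y\<bar> + 1))) at_top at_bot"
   and o2: "filterlim (\<lambda>b. integral {0..b} (\<lambda>y. 1 / (\<bar>r y\<bar> + 1))) at_top at_top"
    using assms(3) unfolding osgood_def by auto
  obtain B1 where B1: "\<forall>y. classical_sol f r T y \<and> (\<forall>x\<in>{0..1}. \<bar>y x 0\<bar> \<le> A)
            \<longrightarrow> (\<forall>t\<in>{0..<T}. \<forall>x\<in>{0..1}. y x t \<le> B1)"
    using upper[OF fd rc o2] A T by blast
  have fd': "\<forall>u. (\<lambda>u. - f (- u)) differentiable (at u)"
  proof
    fix u :: real
    obtain d where "(f has_real_derivative d) (at (-u))" using fd real_differentiable_def by blast
    hence "((\<lambda>u. - f (- u)) has_real_derivative d) (at u)"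
    proof -
      have "((\<lambda>u. f (- u)) has_real_derivative d * (-1)) (at u)"
        by (rule DERIV_chain2[where f=f]) (use \<open>(f has_real_derivative d) (at (-u))\<close> in \<open>auto intro!: derivative_eq_intros\<close>)
      from DERIV_minus[OF this] show ?thesis by simp
    qed
    thus "(\<lambda>u. - f (- u)) differentiable (at u)" using real_differentiable_def by blast
  qed
  have rc': "continuous_on UNIV (\<lambda>u. - r (- u))"
    by (intro continuous_intros continuous_on_compose2[OF rc]) auto
  have eqI: "integral {0..b} (\<lambda>y. 1 / (\<bar>- r (- y)\<bar> + 1)) = integral {-b..0} (\<lambda>y. 1 / (\<bar>r y\<bar> + 1))" for b
    using Henstock_Kurzweil_Integration.integral_reflect_real[where a="-b" and b=0 and f="\<lambda>y. 1 / (\<bar>r y\<bar> + 1)"] by simp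
  have o2': "filterlim (\<lambda>b. integral {0..b} (\<lambda>y. 1 / (\<bar>- r (- y)\<bar> + 1))) at_top at_top"
    unfolding eqI using filterlim_compose[OF o1 filterlim_uminus_at_bot_at_top] by (simp add: o_def)
  obtain B2 where B2: "\<forall>y. classical_sol (\<lambda>u. - f (- u)) (\<lambda>u. - r (- u)) T y \<and> (\<forall>x\<in>{0..1}. \<bar>y x 0\<bar> \<le> A)
            \<longrightarrow> (\<forall>t\<in>{0..<T}. \<forall>x\<in>{0..1}. y x t \<le> B2)"
    using upper[OF fd' rc' o2'] A T by blast
  show "\<exists>B\<ge>0. \<forall>y. classical_sol f r T y \<and> (\<forall>x\<in>{0..1}. \<bar>y x 0\<bar> \<le> A)
            \<longrightarrow> (\<forall>t\<in>{0..<T}. \<forall>x\<in>{0..1}. \<bar>y x t\<bar> \<le> B)"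
  proof (intro exI[of _ "max 0 (max B1 B2)"] conjI allI impI ballI)
    fix y :: "real \<Rightarrow> real \<Rightarrow> real" and t x :: real
    assume H: "classical_sol f r T y \<and> (\<forall>x\<in>{0..1}. \<bar>y x 0\<bar> \<le> A)"
      and t: "t \<in> {0..<T}" and x: "x \<in> {0..1}"
    have u: "y x t \<le> B1" using B1 H t x by blast
    have "classical_sol (\<lambda>u. - f (- u)) (\<lambda>u. - r (- u)) T (\<lambda>x t. - y x t)"
      using reflect_sol H by blast
    moreover have "\<forall>x\<in>{0..1}. \<bar>- y x 0\<bar> \<le> A" using H by simp
    ultimately have l: "- y x t \<le> B2" using B2 t x by blast
    show "\<bar>y x t\<bar> \<le> max 0 (max B1 B2)" using u l by linarith
  qed simp
qed
end
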